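(* Let $A_1,\ldots,A_d$ be Hermitian $n\times n$ matrices and let $M_H\subset\mathbb C^{n}_z\times\mathbb C^{d}_w$ be the model quadric $$M_H=\{(z,w)\in\mathbb C^n\times\mathbb C^d:\ \Re e\, w_j={}^t\bar z A_j z,\ j=1,\ldots,d\}.$$ Then $M_H$ is of finite type at $0$ with Segre number $2$ at $0$ if and only if there exists $V\in\mathbb C^n$ such that the $n\times d$ matrix whose $j$-th column is $A_jV$ has rank $d$.
   Context: Segre sets (Baouendi–Ebenfelt–Rothschild) of a real-analytic generic submanifold $M\subset\mathbb C^N$ at $p\in M$: for $q$ near $p$ let $Q_q$ be the Segre variety of $q$ (obtained by complexifying the defining equations of $M$ and fixing the conjugate variables at $\bar q$); for $M_H$ this is $Q_{(z',w')}=\{(z,w): w_j=-\overline{w'_j}+2\,{}^t\overline{z'}A_jz,\ j=1,\dots,d\}$. Set $S_0(p)=\{p\}$ and $S_{k+1}(p)=\bigcup_{q\in S_k(p)}Q_q$; $S_k(p)$ is the image of a holomorphic Segre map $v^k$ defined on an open set of $\mathbb C^{nk}$ (here $n=\dim_{\mathbb C}$ of the CR tangent space), and $d_k(p)$ denotes the generic rank of $v^k$. $M$ is of finite type at $p$ iff $d_k(p)=N$ for some $k$, and the Segre number of $M$ at $p$ is the smallest such $k$. Here $N=n+d$. *)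

theory Defs
  imports "HOL-Analysis.Analysis"
begin

text \<open>The dimensions n = CARD('n), d = CARD('d) are finite index types (hence n, d >= 1).\<close>

definition hermitian :: "complex^'n^'n \<Rightarrow> bool" where
  "hermitian M \<longleftrightarrow> (\<forall>a b. M $ a $ b = cnj (M $ b $ a))"

definition model_quadric :: "('d::finite \<Rightarrow> complex^'n::finite^'n) \<Rightarrow> ((complex^'n) \<times> (complex^'d)) set" where
  "model_quadric A = {(z, w). \<forall>j. complex_of_real (Re (w $ j)) =
       (\<Sum>a\<in>UNIV. \<Sum>b\<in>UNIV. cnj (z $ a) * A j $ a $ b * z $ b)}"

definition cnj_vec :: "complex^'n \<Rightarrow> complex^'n" where
  "cnj_vec v = (\<chi> i. cnj (v $ i))"

definition cnj_pt :: "(complex^'n) \<times> (complex^'d) \<Rightarrow> (complex^'n) \<times> (complex^'d)" where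
  "cnj_pt q = (cnj_vec (fst q), cnj_vec (snd q))"

text \<open>Complexified defining map of M_H: for the conjugate variable zeta = (zeta_z, zeta_w),
  Z(x, zeta) = (x, w) with w_j = - zeta_w j + 2 (zeta_z)^t A_j x  (holomorphic in x and zeta).\<close>
definition segre_Z :: "('d::finite \<Rightarrow> complex^'n::finite^'n) \<Rightarrow> (complex^'n) \<times> (complex^'d)
                        \<Rightarrow> complex^'n \<Rightarrow> (complex^'n) \<times> (complex^'d)" where
  "segre_Z A \<zeta> x = (x, (\<chi> j. - (snd \<zeta> $ j)
        + 2 * (\<Sum>a\<in>UNIV. \<Sum>b\<in>UNIV. fst \<zeta> $ a * A j $ a $ b * x $ b)))"

text \<open>Segre variety Q_q = {(z,w) : w_j = - conj(w'_j) + 2 conj(z')^t A_j z}, q = (z', w').\<close>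
definition segre_variety :: "('d::finite \<Rightarrow> complex^'n::finite^'n) \<Rightarrow> (complex^'n) \<times> (complex^'d)
                              \<Rightarrow> ((complex^'n) \<times> (complex^'d)) set" where
  "segre_variety A q = range (segre_Z A (cnj_pt q))"

fun segre_set :: "('d::finite \<Rightarrow> complex^'n::finite^'n) \<Rightarrow> (complex^'n) \<times> (complex^'d) \<Rightarrow> nat
                   \<Rightarrow> ((complex^'n) \<times> (complex^'d)) set" where
  "segre_set A p 0 = {p}"
| "segre_set A p (Suc k) = (\<Union>q\<in>segre_set A p k. segre_variety A q)"

text \<open>Holomorphic Segre maps v^k (BER): v^0 = p,
  v^(k+1)(x_0,..,x_k) = Z(x_k, conj-coefficient v^k (x_0,..,x_(k-1))),
  where the conjugate-coefficient map is  X \<mapsto> conj (v^k (conj X)).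
  The variables are X 0, ..., X (k-1) :: complex^'n (only these are used), i.e. C^(nk).
  The image of v^k is exactly S_k(p).\<close>
fun segre_map :: "('d::finite \<Rightarrow> complex^'n::finite^'n) \<Rightarrow> (complex^'n) \<times> (complex^'d) \<Rightarrow> nat
                   \<Rightarrow> (nat \<Rightarrow> complex^'n) \<Rightarrow> (complex^'n) \<times> (complex^'d)" where
  "segre_map A p 0 X = p"
| "segre_map A p (Suc k) X =
     segre_Z A (cnj_pt (segre_map A p k (\<lambda>i. cnj_vec (X i)))) (X k)"

definition flat_pt :: "(complex^'n) \<times> (complex^'d) \<Rightarrow> complex^('n + 'd)" where
  "flat_pt q = (\<chi> c. case c of Inl a \<Rightarrow> fst q $ a | Inr b \<Rightarrow> snd q $ b)"

definition segre_partial :: "('d::finite \<Rightarrow> complex^'n::finite^'n) \<Rightarrow> (complex^'n) \<times> (complex^'d) \<Rightarrow> nat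
                   \<Rightarrow> (nat \<Rightarrow> complex^'n) \<Rightarrow> nat \<Rightarrow> 'n \<Rightarrow> complex^('n + 'd)" where
  "segre_partial A p k X i l =
     (\<chi> c. deriv (\<lambda>t. flat_pt (segre_map A p k (X(i := X i + t *s axis l 1))) $ c) 0)"

definition segre_jac_rank :: "('d::finite \<Rightarrow> complex^'n::finite^'n) \<Rightarrow> (complex^'n) \<times> (complex^'d) \<Rightarrow> nat
                   \<Rightarrow> (nat \<Rightarrow> complex^'n) \<Rightarrow> nat" where
  "segre_jac_rank A p k X = vec.dim {segre_partial A p k X i l | i l. i < k}"

text \<open>Generic rank d_k(p) of v^k (maximal rank of its Jacobian; v^k is polynomial,
  defined on all of C^(nk)).\<close>
definition segre_rank :: "('d::finite \<Rightarrow> complex^'n::finite^'n) \<Rightarrow> (complex^'n) \<times> (complex^'d) \<Rightarrow> nat \<Rightarrow> nat" where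
  "segre_rank A p k = Max (range (segre_jac_rank A p k))"

definition finite_type_at :: "('d::finite \<Rightarrow> complex^'n::finite^'n) \<Rightarrow> (complex^'n) \<times> (complex^'d) \<Rightarrow> bool" where
  "finite_type_at A p \<longleftrightarrow> (\<exists>k. segre_rank A p k = CARD('n) + CARD('d))"

definition segre_number :: "('d::finite \<Rightarrow> complex^'n::finite^'n) \<Rightarrow> (complex^'n) \<times> (complex^'d) \<Rightarrow> nat" where
  "segre_number A p = (LEAST k. segre_rank A p k = CARD('n) + CARD('d))"

end

theory Submission
  imports Defs
begin

lemma flat_Inl[simp]: "flat_pt q $ Inl a = fst q $ a" by (simp add: flat_pt_def)
lemma flat_Inr[simp]: "flat_pt q $ Inr b = snd q $ b" by (simp add: flat_pt_def)

lemma flat_add: "flat_pt (x,y) + flat_pt (x',y') = flat_pt (x+x', y+y')"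
  by (simp add: vec_eq_iff flat_pt_def split: sum.splits)
lemma flat_scale: "c *s flat_pt (x,y) = flat_pt (c *s x, c *s y)"
  by (simp add: vec_eq_iff flat_pt_def split: sum.splits)
lemma flat_zero: "flat_pt (0,0) = 0"
  by (simp add: vec_eq_iff flat_pt_def split: sum.splits)
lemma flat_diff: "flat_pt (x,y) - flat_pt (x',y') = flat_pt (x-x', y-y')"
  by (simp add: vec_eq_iff flat_pt_def split: sum.splits)
lemma flat_surj: "v = flat_pt ((\<chi> a. v $ Inl a), (\<chi> j. v $ Inr j))"
  by (simp add: vec_eq_iff flat_pt_def split: sum.splits)

lemma card_N: "CARD('n::finite + 'd::finite) = CARD('n) + CARD('d)"
  by (simp add: UNIV_Plus_UNIV[symmetric] card_Plus del: UNIV_Plus_UNIV)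

lemma dim_full_iff:
  fixes S :: "(complex^('n::finite + 'd::finite)) set"
  shows "vec.dim S = CARD('n) + CARD('d) \<longleftrightarrow> vec.span S = UNIV"
  unfolding card_N[symmetric] using vec.dim_eq_full[of S] by (simp add: vec.dimension_def card_cart_basis)

lemma deriv_lin: "deriv (\<lambda>t::complex. a + t * b) 0 = b"
  by (rule DERIV_imp_deriv) (auto intro!: derivative_eq_intros)
lemma deriv_c: "deriv (\<lambda>t::complex. a) 0 = 0"
  by simp

lemma cnj_pt0: "cnj_pt 0 = 0" 
  by (simp add: cnj_pt_def cnj_vec_def vec_eq_iff zero_prod_def)

lemma sm1: "segre_map A 0 (Suc 0) Y = (Y 0, 0)"
  by (simp add: cnj_pt0 segre_Z_def vec_eq_iff)

lemma sm2: "segre_map A 0 2 Y = (Y 1, \<chi> j. 2 * (\<Sum>a\<in>UNIV. \<Sum>b\<in>UNIV. Y 0 $ a * A j $ a $ b * Y 1 $ b))"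
  by (simp add: numeral_2_eq_2 sm1 segre_Z_def cnj_pt_def cnj_vec_def vec_eq_iff)

lemma P1: "segre_partial A 0 (Suc 0) X 0 l = flat_pt (axis l 1, 0)"
proof -
  { fix c :: "'a + 'b"
    have "deriv (\<lambda>t. flat_pt (segre_map A 0 (Suc 0) (X(0 := X 0 + t *s axis l 1))) $ c) 0 = flat_pt (axis l 1, 0::complex^'b) $ c"
    proof (cases c)
      case (Inl a)
      have "(\<lambda>t. flat_pt (segre_map A 0 (Suc 0) (X(0 := X 0 + t *s axis l 1))) $ c) = (\<lambda>t. X 0 $ a + t * axis l 1 $ a)"
        using Inl by (simp add: segre_Z_def cnj_pt0)
      then show ?thesis using Inl by (simp add: deriv_lin)
    next
      case (Inr j)
      then show ?thesis by (simp add: segre_Z_def cnj_pt0)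
    qed }
  then show ?thesis by (simp add: segre_partial_def vec_eq_iff)
qed

lemma sumdelta1: "(\<Sum>a\<in>UNIV. (axis l 1 $ a) * f a) = (f l :: complex)"
proof -
  have "(\<Sum>a\<in>UNIV. (axis l 1 $ a) * f a) = (\<Sum>a\<in>UNIV. if a = l then f a else 0)" by (rule sum.cong) (auto simp: axis_def)
  then show ?thesis by simp
qed
lemma sumdelta2: "(\<Sum>a\<in>UNIV. f a * (axis l 1 $ a)) = (f l :: complex)"
proof -
  have "(\<Sum>a\<in>UNIV. f a * (axis l 1 $ a)) = (\<Sum>a\<in>UNIV. if a = l then f a else 0)" by (rule sum.cong) (auto simp: axis_def)
  then show ?thesis by simp
qed

lemma P20: "segre_partial A 0 2 X 0 l = flat_pt (0, \<chi> j. 2 * (\<Sum>b\<in>UNIV. A j $ l $ b * X 1 $ b))"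
proof -
  { fix c :: "'a + 'b"
    have "deriv (\<lambda>t. flat_pt (segre_map A 0 2 (X(0 := X 0 + t *s axis l 1))) $ c) 0 = flat_pt (0::complex^'a, \<chi> j. 2 * (\<Sum>b\<in>UNIV. A j $ l $ b * X 1 $ b)) $ c"
    proof (cases c)
      case (Inl a)
      then show ?thesis by (simp add: sm2)
    next
      case (Inr j)
      have "(\<lambda>t. flat_pt (segre_map A 0 2 (X(0 := X 0 + t *s axis l 1))) $ c) = 
        (\<lambda>t. 2 * (\<Sum>a\<in>UNIV. \<Sum>b\<in>UNIV. X 0 $ a * A j $ a $ b * X 1 $ b) + t * (2 * (\<Sum>b\<in>UNIV. A j $ l $ b * X 1 $ b)))"
      proof
        fix t
        have "(\<Sum>a\<in>UNIV. \<Sum>b\<in>UNIV. (X 0 $ a + t * axis l 1 $ a) * A j $ a $ b * X 1 $ b)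
           = (\<Sum>a\<in>UNIV. \<Sum>b\<in>UNIV. X 0 $ a * A j $ a $ b * X 1 $ b) + t * (\<Sum>a\<in>UNIV. axis l 1 $ a * (\<Sum>b\<in>UNIV. A j $ a $ b * X 1 $ b))"
          by (simp add: algebra_simps sum.distrib sum_distrib_left)
        also have "... = (\<Sum>a\<in>UNIV. \<Sum>b\<in>UNIV. X 0 $ a * A j $ a $ b * X 1 $ b) + t * (\<Sum>b\<in>UNIV. A j $ l $ b * X 1 $ b)"
          by (simp only: sumdelta1)
        finally show "flat_pt (segre_map A 0 2 (X(0 := X 0 + t *s axis l 1))) $ c = 2 * (\<Sum>a\<in>UNIV. \<Sum>b\<in>UNIV. X 0 $ a * A j $ a $ b * X 1 $ b) + t * (2 * (\<Sum>b\<in>UNIV. A j $ l $ b * X 1 $ b))"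
          using Inr by (simp add: sm2 algebra_simps)
      qed
      then show ?thesis using Inr by (simp add: deriv_lin)
    qed }
  then show ?thesis by (simp add: segre_partial_def vec_eq_iff)
qed

lemma P21: "segre_partial A 0 2 X 1 l = flat_pt (axis l 1, \<chi> j. 2 * (\<Sum>a\<in>UNIV. X 0 $ a * A j $ a $ l))"
proof -
  { fix c :: "'a + 'b"
    have "deriv (\<lambda>t. flat_pt (segre_map A 0 2 (X(1 := X 1 + t *s axis l 1))) $ c) 0 = flat_pt (axis l 1, \<chi> j. 2 * (\<Sum>a\<in>UNIV. X 0 $ a * A j $ a $ l)) $ c"
    proof (cases c)
      case (Inl a)
      have "(\<lambda>t. flat_pt (segre_map A 0 2 (X(1 := X 1 + t *s axis l 1))) $ c) = (\<lambda>t. X 1 $ a + t * axis l 1 $ a)"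
        using Inl by (simp add: sm2)
      then show ?thesis using Inl by (simp add: deriv_lin)
    next
      case (Inr j)
      have "(\<lambda>t. flat_pt (segre_map A 0 2 (X(1 := X 1 + t *s axis l 1))) $ c) = 
        (\<lambda>t. 2 * (\<Sum>a\<in>UNIV. \<Sum>b\<in>UNIV. X 0 $ a * A j $ a $ b * X 1 $ b) + t * (2 * (\<Sum>a\<in>UNIV. X 0 $ a * A j $ a $ l)))"
      proof
        fix t
        have "(\<Sum>a\<in>UNIV. \<Sum>b\<in>UNIV. X 0 $ a * A j $ a $ b * (X 1 $ b + t * axis l 1 $ b))
           = (\<Sum>a\<in>UNIV. \<Sum>b\<in>UNIV. X 0 $ a * A j $ a $ b * X 1 $ b) + t * (\<Sum>a\<in>UNIV. \<Sum>b\<in>UNIV. (X 0 $ a * A j $ a $ b) * axis l 1 $ b)"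
          by (simp add: algebra_simps sum.distrib sum_distrib_left)
        also have "... = (\<Sum>a\<in>UNIV. \<Sum>b\<in>UNIV. X 0 $ a * A j $ a $ b * X 1 $ b) + t * (\<Sum>a\<in>UNIV. X 0 $ a * A j $ a $ l)"
          by (simp only: sumdelta2)
        finally show "flat_pt (segre_map A 0 2 (X(1 := X 1 + t *s axis l 1))) $ c = 2 * (\<Sum>a\<in>UNIV. \<Sum>b\<in>UNIV. X 0 $ a * A j $ a $ b * X 1 $ b) + t * (2 * (\<Sum>a\<in>UNIV. X 0 $ a * A j $ a $ l))"
          using Inr by (simp add: sm2 algebra_simps)
      qed
      then show ?thesis using Inr by (simp add: deriv_lin)
    qed }
  then show ?thesis by (simp add: segre_partial_def vec_eq_iff)
qed

lemma rank_iff: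
  fixes A :: "'d::finite \<Rightarrow> complex^'n::finite^'n"
  shows "segre_rank A p k = CARD('n) + CARD('d) \<longleftrightarrow>
    (\<exists>X. vec.span {segre_partial A p k X i l | i l. i < k} = UNIV)"
proof -
  let ?R = "range (segre_jac_rank A p k)"
  have bd: "\<And>X. segre_jac_rank A p k X \<le> CARD('n) + CARD('d)"
    unfolding segre_jac_rank_def card_N[symmetric] by (rule dim_subset_UNIV_cart_gen)
  have fin: "finite ?R" by (rule finite_subset[of _ "{..CARD('n) + CARD('d)}"]) (auto simp: bd)
  have ne: "?R \<noteq> {}" by simp
  have "segre_rank A p k = CARD('n) + CARD('d) \<longleftrightarrow> (\<exists>X. segre_jac_rank A p k X = CARD('n) + CARD('d))"
  proof
    assume "segre_rank A p k = CARD('n) + CARD('d)"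
    then show "\<exists>X. segre_jac_rank A p k X = CARD('n) + CARD('d)"
      using Max_in[OF fin ne] unfolding segre_rank_def by force
  next
    assume "\<exists>X. segre_jac_rank A p k X = CARD('n) + CARD('d)"
    then obtain X where "segre_jac_rank A p k X = CARD('n) + CARD('d)" by blast
    then have "CARD('n) + CARD('d) \<le> Max ?R" using Max_ge[OF fin, of "segre_jac_rank A p k X"] by (metis rangeI)
    moreover have "Max ?R \<le> CARD('n) + CARD('d)" using Max_in[OF fin ne] bd by force
    ultimately show "segre_rank A p k = CARD('n) + CARD('d)" unfolding segre_rank_def by simp
  qed
  then show ?thesis unfolding segre_jac_rank_def dim_full_iff by simp
qed

lemma rank0:
  fixes A :: "'d::finite \<Rightarrow> complex^'n::finite^'n"
  shows "segre_rank A 0 0 \<noteq> CARD('n) + CARD('d)"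
proof -
  have "vec.span {} \<noteq> (UNIV :: (complex^('n+'d)) set)"
  proof
    assume "vec.span {} = (UNIV :: (complex^('n+'d)) set)"
    then have "axis (Inr undefined) 1 \<in> vec.span ({} :: (complex^('n+'d)) set)" by simp
    then show False by (simp add: axis_eq_0_iff)
  qed
  then show ?thesis unfolding rank_iff by simp
qed

lemma rank1:
  fixes A :: "'d::finite \<Rightarrow> complex^'n::finite^'n"
  shows "segre_rank A 0 1 \<noteq> CARD('n) + CARD('d)"
proof -
  let ?T = "{v :: complex^('n+'d). v $ Inr undefined = 0}"
  have sub: "vec.subspace ?T" by (simp add: vec.subspace_def)
  { fix X
    have "{segre_partial A 0 1 X i l | i l. i < 1} \<subseteq> ?T" by (auto simp: P1)
    then have "vec.span {segre_partial A 0 1 X i l | i l. i < 1} \<subseteq> ?T"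
      using vec.span_minimal sub by blast
    moreover have "axis (Inr undefined) 1 \<notin> ?T" by simp
    ultimately have "vec.span {segre_partial A 0 1 X i l | i l. i < 1} \<noteq> UNIV" by blast }
  then show ?thesis unfolding rank_iff by simp
qed

lemma rankM:
  fixes M :: "complex^'d::finite^'n::finite"
  shows "rank M = CARD('d) \<longleftrightarrow> vec.span (rows M) = UNIV"
  unfolding row_rank_def_gen using vec.dim_eq_full[of "rows M"] by (simp add: vec.dimension_def card_cart_basis)

lemma row_M: "row l ((\<chi> a. \<chi> j. (A j *v V) $ a) :: complex^'d::finite^'n::finite) = (\<chi> j. \<Sum>b\<in>UNIV. A j $ l $ b * V $ b)"
  by (simp add: row_def matrix_vector_mult_def vec_eq_iff)

lemma S2: "{segre_partial A 0 2 X i l | i l. i < 2} =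
   range (\<lambda>l. flat_pt (0, \<chi> j. 2 * (\<Sum>b\<in>UNIV. A j $ l $ b * X 1 $ b))) \<union>
   range (\<lambda>l. flat_pt (axis l 1, \<chi> j. 2 * (\<Sum>a\<in>UNIV. X 0 $ a * A j $ a $ l)))"
  (is "?L = ?R0 \<union> ?R1")
proof (intro equalityI subsetI)
  fix v assume "v \<in> ?L"
  then obtain i l where v: "v = segre_partial A 0 2 X i l" and "i < 2" by blast
  then have "i = 0 \<or> i = 1" by auto
  then show "v \<in> ?R0 \<union> ?R1"
  proof
    assume "i = 0" then show ?thesis using v P20[of A X l] by blast
  next
    assume "i = 1" then show ?thesis using v P21[of A X l] by blast
  qed
next
  fix v assume "v \<in> ?R0 \<union> ?R1"
  then show "v \<in> ?L"
  proof
    assume "v \<in> ?R0" then obtain l where "v = segre_partial A 0 2 X 0 l" by (auto simp only: P20)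
    then have "\<exists>i l. v = segre_partial A 0 2 X i l \<and> i < 2" by (intro exI[of _ "0::nat"] exI[of _ l]) simp
    then show ?thesis by simp
  next
    assume "v \<in> ?R1" then obtain l where "v = segre_partial A 0 2 X 1 l" by (auto simp only: P21)
    then have "\<exists>i l. v = segre_partial A 0 2 X i l \<and> i < 2" by (intro exI[of _ "1::nat"] exI[of _ l]) simp
    then show ?thesis by simp
  qed
qed

lemma dir2:
  fixes A :: "'d::finite \<Rightarrow> complex^'n::finite^'n"
  assumes R: "vec.span (rows ((\<chi> a. \<chi> j. (A j *v X 1) $ a) :: complex^'d^'n)) = UNIV"
  shows "vec.span {segre_partial A 0 2 X i l | i l. i < 2} = UNIV"
proof -
  define c0 where "c0 l = flat_pt (0::complex^'n, \<chi> j. 2 * (\<Sum>b\<in>UNIV. A j $ l $ b * X 1 $ b))" for l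
  define w :: "'n \<Rightarrow> complex^'d" where "w l = (\<chi> j. 2 * (\<Sum>a\<in>UNIV. X 0 $ a * A j $ a $ l))" for l
  define T where "T = vec.span {segre_partial A 0 2 X i l | i l. i < 2}"
  have TT: "T = vec.span (range c0 \<union> range (\<lambda>l. flat_pt (axis l 1, w l)))"
    unfolding T_def S2 c0_def w_def by simp
  have c0in: "c0 l \<in> T" for l unfolding TT by (intro vec.span_base) simp
  have c1in: "flat_pt (axis l 1, w l) \<in> T" for l unfolding TT by (intro vec.span_base) simp
  have subT: "vec.subspace T" unfolding T_def by (rule vec.subspace_span)
  have Y0: "vec.subspace {y. flat_pt (0::complex^'n, y) \<in> T}"
  proof (rule vec.subspaceI)
    show "0 \<in> {y. flat_pt (0::complex^'n, y) \<in> T}" by (simp add: flat_zero vec.subspace_0[OF subT])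
  next
    fix x y assume "x \<in> {y. flat_pt (0::complex^'n, y) \<in> T}" "y \<in> {y. flat_pt (0::complex^'n, y) \<in> T}"
    then have "flat_pt (0::complex^'n, x) + flat_pt (0, y) \<in> T" using vec.subspace_add[OF subT] by simp
    then show "x + y \<in> {y. flat_pt (0::complex^'n, y) \<in> T}" by (simp add: flat_add)
  next
    fix c x assume "x \<in> {y. flat_pt (0::complex^'n, y) \<in> T}"
    then have "c *s flat_pt (0::complex^'n, x) \<in> T" using vec.subspace_scale[OF subT] by simp
    then show "c *s x \<in> {y. flat_pt (0::complex^'n, y) \<in> T}" by (simp add: flat_scale)
  qed
  have "rows ((\<chi> a. \<chi> j. (A j *v X 1) $ a) :: complex^'d^'n) \<subseteq> {y. flat_pt (0::complex^'n, y) \<in> T}"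
  proof
    fix r assume "r \<in> rows ((\<chi> a. \<chi> j. (A j *v X 1) $ a) :: complex^'d^'n)"
    then obtain l where r: "r = (\<chi> j. \<Sum>b\<in>UNIV. A j $ l $ b * X 1 $ b)" by (auto simp: rows_def row_M)
    have "flat_pt (0::complex^'n, r) = (1/2) *s c0 l"
      unfolding c0_def r flat_scale by (simp add: vec_eq_iff flat_pt_def split: sum.splits)
    then show "r \<in> {y. flat_pt (0::complex^'n, y) \<in> T}" using c0in vec.span_scale subT
      by (simp add: vec.subspace_scale)
  qed
  then have all0: "flat_pt (0::complex^'n, y) \<in> T" for y
    using vec.span_minimal[OF _ Y0] R by blast
  have Y1: "vec.subspace {x. flat_pt (x, 0::complex^'d) \<in> T}"
  proof (rule vec.subspaceI)
    show "0 \<in> {x. flat_pt (x, 0::complex^'d) \<in> T}" by (simp add: flat_zero vec.subspace_0[OF subT])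
  next
    fix x y assume "x \<in> {x. flat_pt (x, 0::complex^'d) \<in> T}" "y \<in> {x. flat_pt (x, 0::complex^'d) \<in> T}"
    then have "flat_pt (x, 0::complex^'d) + flat_pt (y, 0) \<in> T" using vec.subspace_add[OF subT] by simp
    then show "x + y \<in> {x. flat_pt (x, 0::complex^'d) \<in> T}" by (simp add: flat_add)
  next
    fix c x assume "x \<in> {x. flat_pt (x, 0::complex^'d) \<in> T}"
    then have "c *s flat_pt (x, 0::complex^'d) \<in> T" using vec.subspace_scale[OF subT] by simp
    then show "c *s x \<in> {x. flat_pt (x, 0::complex^'d) \<in> T}" by (simp add: flat_scale)
  qed
  have "cart_basis \<subseteq> {x. flat_pt (x, 0::complex^'d) \<in> T}"
  proof
    fix b :: "complex^'n" assume "b \<in> cart_basis"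
    then obtain l where b: "b = axis l 1" by (auto simp: cart_basis_def)
    have "flat_pt (axis l 1, w l) - flat_pt (0, w l) \<in> T"
      using c1in all0 subT by (simp add: vec.subspace_diff)
    then show "b \<in> {x. flat_pt (x, 0::complex^'d) \<in> T}" by (simp add: flat_diff b)
  qed
  then have all1: "flat_pt (x, 0::complex^'d) \<in> T" for x
    using vec.span_minimal[OF _ Y1] span_cart_basis by blast
  have "v \<in> T" for v
  proof -
    have "v = flat_pt ((\<chi> a. v $ Inl a), 0) + flat_pt (0, (\<chi> j. v $ Inr j))"
      by (subst flat_surj) (simp add: flat_add)
    then show ?thesis using all0 all1 subT by (metis vec.subspace_add)
  qed
  then show ?thesis unfolding T_def by blast
qed

lemma vdelta: "(\<Sum>a\<in>UNIV. (axis l 1 $ a) *s (f a :: complex^'d)) = f l"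
proof -
  have "(\<Sum>a\<in>UNIV. (axis l 1 $ a) *s f a) = (\<Sum>a\<in>UNIV. if a = l then f a else 0)" by (rule sum.cong) (auto simp: axis_def)
  then show ?thesis by simp
qed

lemma dir1:
  fixes A :: "'d::finite \<Rightarrow> complex^'n::finite^'n"
  assumes T: "vec.span {segre_partial A 0 2 X i l | i l. i < 2} = UNIV"
  shows "vec.span (rows ((\<chi> a. \<chi> j. (A j *v X 1) $ a) :: complex^'d^'n)) = UNIV"
proof -
  let ?R = "rows ((\<chi> a. \<chi> j. (A j *v X 1) $ a) :: complex^'d^'n)"
  define w :: "'n \<Rightarrow> complex^'d" where "w l = (\<chi> j. 2 * (\<Sum>a\<in>UNIV. X 0 $ a * A j $ a $ l))" for l
  define \<rho> :: "complex^('n+'d) \<Rightarrow> complex^'d" where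
    "\<rho> v = (\<chi> j. v $ Inr j) - (\<Sum>a\<in>UNIV. (v $ Inl a) *s w a)" for v
  have r0: "\<rho> 0 = 0" by (simp add: \<rho>_def vec_eq_iff)
  have radd: "\<rho> (x + y) = \<rho> x + \<rho> y" for x y
    by (simp add: \<rho>_def vec_eq_iff sum_component algebra_simps sum.distrib)
  have rsc: "\<rho> (c *s x) = c *s \<rho> x" for c x
    by (simp add: \<rho>_def vec_eq_iff sum_component algebra_simps sum_distrib_left)
  have subR: "vec.subspace (vec.span ?R)" by (rule vec.subspace_span)
  have P: "vec.subspace {v. \<rho> v \<in> vec.span ?R}"
    unfolding vec.subspace_def
    using subR unfolding vec.subspace_def by (simp add: r0 radd rsc del: One_nat_def)
  have "{segre_partial A 0 2 X i l | i l. i < 2} \<subseteq> {v. \<rho> v \<in> vec.span ?R}"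
  proof
    fix v assume "v \<in> {segre_partial A 0 2 X i l | i l. i < 2}"
    then consider l where "v = flat_pt (0, \<chi> j. 2 * (\<Sum>b\<in>UNIV. A j $ l $ b * X 1 $ b))"
      | l where "v = flat_pt (axis l 1, w l)"
      unfolding S2 w_def by blast
    then show "v \<in> {v. \<rho> v \<in> vec.span ?R}"
    proof cases
      case 1
      have "\<rho> v = 2 *s row l ((\<chi> a. \<chi> j. (A j *v X 1) $ a) :: complex^'d^'n)"
        unfolding 1 row_M by (simp add: \<rho>_def vec_eq_iff)
      moreover have "row l ((\<chi> a. \<chi> j. (A j *v X 1) $ a) :: complex^'d^'n) \<in> ?R"
        by (auto simp: rows_def)
      ultimately show ?thesis by (simp add: vec.span_base vec.span_scale)
    next
      case 2
      have "\<rho> v = 0" unfolding 2 by (simp add: \<rho>_def vdelta)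
      then show ?thesis by (simp add: vec.span_zero)
    qed
  qed
  then have "vec.span {segre_partial A 0 2 X i l | i l. i < 2} \<subseteq> {v. \<rho> v \<in> vec.span ?R}"
    using vec.span_minimal[OF _ P] by blast
  then have "\<rho> (flat_pt (0, y)) \<in> vec.span ?R" for y using T by blast
  moreover have "\<rho> (flat_pt (0, y)) = y" for y by (simp add: \<rho>_def)
  ultimately show ?thesis by auto
qed

theorem lemma1p2:
  fixes A :: "'d::finite \<Rightarrow> complex^'n::finite^'n"
  assumes "\<forall>j. hermitian (A j)"
  shows "(finite_type_at A 0 \<and> segre_number A 0 = 2) \<longleftrightarrow>
         (\<exists>V :: complex^'n. rank ((\<chi> a. \<chi> j. (A j *v V) $ a) :: complex^'d^'n) = CARD('d))"
proof -
  have step1: "(finite_type_at A 0 \<and> segre_number A 0 = 2) \<longleftrightarrow> segre_rank A 0 2 = CARD('n) + CARD('d)"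
  proof
    assume H: "finite_type_at A 0 \<and> segre_number A 0 = 2"
    then have "\<exists>k. segre_rank A 0 k = CARD('n) + CARD('d)" unfolding finite_type_at_def by blast
    from LeastI_ex[OF this] H show "segre_rank A 0 2 = CARD('n) + CARD('d)"
      unfolding segre_number_def by simp
  next
    assume H: "segre_rank A 0 2 = CARD('n) + CARD('d)"
    have "segre_number A 0 = 2" unfolding segre_number_def
    proof (rule Least_equality)
      show "segre_rank A 0 2 = CARD('n) + CARD('d)" by (rule H)
      fix k assume k: "segre_rank A 0 k = CARD('n) + CARD('d)"
      show "2 \<le> k"
      proof (rule ccontr)
        assume "\<not> 2 \<le> k"
        then have "k = 0 \<or> k = 1" by auto
        then show False using k rank0[of A] rank1[of A] by auto
      qed
    qed
    then show "finite_type_at A 0 \<and> segre_number A 0 = 2"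
      using H unfolding finite_type_at_def by blast
  qed
  have step2: "segre_rank A 0 2 = CARD('n) + CARD('d) \<longleftrightarrow>
         (\<exists>V :: complex^'n. vec.span (rows ((\<chi> a. \<chi> j. (A j *v V) $ a) :: complex^'d^'n)) = UNIV)"
  proof
    assume "segre_rank A 0 2 = CARD('n) + CARD('d)"
    then obtain X where "vec.span {segre_partial A 0 2 X i l | i l. i < 2} = UNIV"
      unfolding rank_iff by blast
    from dir1[OF this] show "\<exists>V :: complex^'n. vec.span (rows ((\<chi> a. \<chi> j. (A j *v V) $ a) :: complex^'d^'n)) = UNIV"
      by blast
  next
    assume "\<exists>V :: complex^'n. vec.span (rows ((\<chi> a. \<chi> j. (A j *v V) $ a) :: complex^'d^'n)) = UNIV"
    then obtain V :: "complex^'n" where V: "vec.span (rows ((\<chi> a. \<chi> j. (A j *v V) $ a) :: complex^'d^'n)) = UNIV"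
      by blast
    have "vec.span {segre_partial A 0 2 (\<lambda>_. V) i l | i l. i < 2} = UNIV"
      by (rule dir2) (use V in simp)
    then show "segre_rank A 0 2 = CARD('n) + CARD('d)" unfolding rank_iff by blast
  qed
  show ?thesis unfolding step1 step2 rankM by simp
qed

end
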